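(* Consider the online convex optimization protocol and the algorithm AOD described in the context, with known horizon $T$, under the standing assumptions (A1)–(A3). Then for every $1\le\tau\le T$, the plays $\mathbf{w}_t$ of AOD satisfy \[ \max_{[s,s+\tau-1]\subseteq[T]}\Big(\sum_{t=s}^{s+\tau-1}f_t(\mathbf{w}_t)-\min_{\mathbf{w}\in\Omega}\sum_{t=s}^{s+\tau-1}f_t(\mathbf{w})\Big)\le 8\big(\sqrt{3c(T)}+DG\big)\sqrt{\tau}=O(\sqrt{\tau\log T}), \] where $c(T)=1+\ln T+\ln(1+\log_2 T)+\ln\frac{5+3\ln(1+T)}{2}$.
   Context: Online convex optimization: $\Omega\subseteq\mathbb{R}^d$ is convex; in round $t=1,\ldots,T$ the learner plays $\mathbf{w}_t\in\Omega$ and then a convex $f_t:\Omega\to\mathbb{R}$ is revealed. Standing assumptions: (A1) $\|\nabla f_t(\mathbf{w})\|_2\le G$ for all $\mathbf{w}\in\Omega$, $t\in[T]$ ($\nabla$ a (sub)gradient); (A2) $\mathbf{0}\in\Omega$ and $\max_{\mathbf{w},\mathbf{w}'\in\Omega}\|\mathbf{w}-\mathbf{w}'\|_2\le D$; (A3) $0\le f_t(\mathbf{w})\le1$ for all $\mathbf{w}\in\Omega$, $t\in[T]$. $\Pi_\Omega$ is Euclidean projection onto $\Omega$. Online gradient descent (OGD) with step size $\eta$ updates $\mathbf{v}\mapsto\Pi_\Omega[\mathbf{v}-\eta\nabla f_t(\mathbf{v})]$ after seeing $f_t$. Dense geometric covering intervals: $\mathcal{D}=\bigcup_{k\ge0,\,2^k\le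 T}\mathcal{D}_k$, $\mathcal{D}_k=\{I_k^i=[(i-1)2^k+1,\,i2^k]: i=1,2,\ldots\}$. Algorithm AOD: for each $I\in\mathcal{D}$ there is an expert $E_I$ running OGD with step size $\eta_I=D/(G\sqrt{|I|})$ during the rounds $t\in I$, producing $\mathbf{w}_{t,I}\in\Omega$ for $t\in I$ (with $\mathbf{w}_{t+1,I}=\Pi_\Omega[\mathbf{w}_{t,I}-\eta_I\nabla f_t(\mathbf{w}_{t,I})]$). Its initial point $\mathbf{w}_{\min I,I}$ is arbitrary in $\Omega$ if $\min I=1$; otherwise (warm start) it is the OGD iterate of the expert $E_J$ of the preceding interval $J\in\mathcal{D}$ of the same length ($J=[\min I-|I|,\min I-1]$) after processing $f_{\min I-1}$, i.e. $\Pi_\Omega[\mathbf{w}_{\min I-1,J}-\eta_J\nabla f_{\min I-1}(\mathbf{w}_{\min I-1,J})]$. In round $t$ the active experts are $\mathcal{A}_t=\{E_I: I\in\mathcal{D}, t\in I\}$. Meta-algorithm (AdaNormalHedge): with $\Phi(R,C)=\exp([R]_+^2/(3C))$, $[x]_+=\max(0,x)$, $\Phi(0,0)=1$, and $w(R,C)=\tfrac12(\Phi(R+1,C+1)-\Phi(R-1,C+1))$, define $R_{t-1,I}=\sum_{u=\min I}^{t-1}(f_u(\mathbf{w}_u)-f_u(\mathbf{w}_{u,I}))$ and $C_{t-1,I}=\sum_{u=\min I}^{t-1}|f_u(\mathbf{w}_u)-f_u(\mathbf{w}_{u,I})|$ (both $0$ when $t=\min I$), weights $p_{t,I}=w(R_{t-1,I},C_{t-1,I})/\sum_{E_{I'}\in\mathcal{A}_t}w(R_{t-1,I'},C_{t-1,I'})$,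 and the played point $\mathbf{w}_t=\sum_{E_I\in\mathcal{A}_t}p_{t,I}\mathbf{w}_{t,I}$. *)

theory Defs
  imports "HOL-Analysis.Analysis"
begin

definition ivl_lo :: "nat \<Rightarrow> nat \<Rightarrow> nat" where
  "ivl_lo k i = (i - 1) * 2 ^ k + 1"

definition ivl_hi :: "nat \<Rightarrow> nat \<Rightarrow> nat" where
  "ivl_hi k i = i * 2 ^ k"

definition covering :: "nat \<Rightarrow> (nat \<times> nat) set" where
  "covering T = {(k, i). 2 ^ k \<le> T \<and> 1 \<le> i}"

definition active :: "nat \<Rightarrow> nat \<Rightarrow> (nat \<times> nat) set" where
  "active T t = {(k, i). (k, i) \<in> covering T \<and> ivl_lo k i \<le> t \<and> t \<le> ivl_hi k i}"

definition eta :: "real \<Rightarrow> real \<Rightarrow> nat \<Rightarrow> real" where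
  "eta D G k = D / (G * sqrt (2 ^ k))"

definition ogd_step ::
  "'a::euclidean_space set \<Rightarrow> (nat \<Rightarrow> 'a \<Rightarrow> 'a) \<Rightarrow> real \<Rightarrow> nat \<Rightarrow> 'a \<Rightarrow> 'a" where
  "ogd_step \<Omega> grad \<eta> t v = closest_point \<Omega> (v - \<eta> *\<^sub>R grad t v)"

text \<open>Iterate w_{t,I} of the expert E_I, I = I_k^i, for rounds t in I.
  init k is the arbitrary initial point of the first expert of level k (min I = 1);
  otherwise the expert is warm-started from the OGD update of the expert of the
  preceding interval I_k^{i-1} after processing f_{min I - 1}.  The value at
  argument 0 (and outside I) is irrelevant.\<close>
fun expert_pt ::
  "'a::euclidean_space set \<Rightarrow> (nat \<Rightarrow> 'a \<Rightarrow> 'a) \<Rightarrow> real \<Rightarrow> real \<Rightarrow> (nat \<Rightarrow> 'a)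
   \<Rightarrow> nat \<Rightarrow> nat \<Rightarrow> nat \<Rightarrow> 'a" where
  "expert_pt \<Omega> grad D G init k i 0 = init k"
| "expert_pt \<Omega> grad D G init k i (Suc t) =
     (if Suc t = ivl_lo k i then
        (if i \<le> 1 then init k
         else ogd_step \<Omega> grad (eta D G k) t (expert_pt \<Omega> grad D G init k (i - 1) t))
      else ogd_step \<Omega> grad (eta D G k) t (expert_pt \<Omega> grad D G init k i t))"

definition Phi :: "real \<Rightarrow> real \<Rightarrow> real" where
  "Phi R C = (if R = 0 \<and> C = 0 then 1 else exp ((max 0 R)\<^sup>2 / (3 * C)))"

definition anh_weight :: "real \<Rightarrow> real \<Rightarrow> real" where
  "anh_weight R C = (Phi (R + 1) (C + 1) - Phi (R - 1) (C + 1)) / 2"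

text \<open>These equations determine w on [1,T] uniquely by recursion on t.\<close>
definition AOD_plays ::
  "nat \<Rightarrow> 'a::euclidean_space set \<Rightarrow> (nat \<Rightarrow> 'a \<Rightarrow> real) \<Rightarrow> (nat \<Rightarrow> 'a \<Rightarrow> 'a)
   \<Rightarrow> real \<Rightarrow> real \<Rightarrow> (nat \<Rightarrow> 'a) \<Rightarrow> (nat \<Rightarrow> 'a) \<Rightarrow> bool" where
  "AOD_plays T \<Omega> f grad D G init w \<longleftrightarrow>
     (\<forall>t\<in>{1..T}.
        let x = (\<lambda>k i u. expert_pt \<Omega> grad D G init k i u);
            R = (\<lambda>k i. \<Sum>u\<in>{ivl_lo k i..<t}. f u (w u) - f u (x k i u));
            C = (\<lambda>k i. \<Sum>u\<in>{ivl_lo k i..<t}. \<bar>f u (w u) - f u (x k i u)\<bar>);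
            Z = (\<Sum>(k, i)\<in>active T t. anh_weight (R k i) (C k i));
            p = (\<lambda>k i. anh_weight (R k i) (C k i) / Z)
        in w t = (\<Sum>(k, i)\<in>active T t. p k i *\<^sub>R x k i t))"

definition cT :: "nat \<Rightarrow> real" where
  "cT T = 1 + ln (real T) + ln (1 + log 2 (real T)) + ln ((5 + 3 * ln (1 + real T)) / 2)"

end

theory Submission
  imports Defs "HOL-Probability.Hoeffding"
begin


lemma Phi_eq: "Phi R C = exp ((max 0 R)\<^sup>2 / (3 * C))"
  unfolding Phi_def by auto

lemma cosh_le: assumes "b \<ge> (0::real)" shows "(exp b + exp (-b)) / 2 \<le> exp (b\<^sup>2 / 2)"
proof -
  have h1: "- (2*b) * (1/2) + ln (1 + (1/2) * (exp (2*b) - 1)) \<le> (2*b)\<^sup>2 / 8"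
    using Hoeffdings_lemma_aux[of "2*b" "1/2"] assms by simp
  have eq: "(1 + exp (2*b))/2 = 1 + (1/2) * (exp (2*b) - 1)" by (simp add: field_simps)
  have "(2*b)\<^sup>2 / 8 = b\<^sup>2/2" by (simp add: power2_eq_square)
  hence "ln ((1 + exp (2*b))/2) \<le> b + b\<^sup>2/2"
    using h1 unfolding eq by linarith
  hence "(1 + exp (2*b))/2 \<le> exp (b + b\<^sup>2/2)"
    by (metis add_pos_pos divide_pos_pos exp_gt_zero exp_le_cancel_iff exp_ln zero_less_one zero_less_numeral)
  hence "exp (-b) * ((1 + exp (2*b))/2) \<le> exp (-b) * exp (b + b\<^sup>2/2)"
    by (simp)
  moreover have "exp (-b) * ((1 + exp (2*b))/2) = (exp b + exp (-b)) / 2"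
    by (simp add: algebra_simps flip: exp_add)
  moreover have "exp (-b) * exp (b + b\<^sup>2/2) = exp (b\<^sup>2/2)"
    by (simp flip: exp_add)
  ultimately show ?thesis by simp
qed

lemma exp_small: assumes "0 \<le> y" "y \<le> (1::real)/3" shows "exp y - 1 \<le> 3/2 * y"
proof -
  have "1 - y \<le> exp (-y)" using exp_ge_add_one_self[of "-y"] by simp
  hence "exp y * (1 - y) \<le> exp y * exp (-y)" by (intro mult_left_mono) auto
  hence "exp y * (1 - y) \<le> 1" by (simp flip: exp_add)
  hence "exp y \<le> 1 / (1 - y)" using assms by (simp add: field_simps)
  moreover have "1 / (1 - y) \<le> 1 + 3/2 * y" proof -
    have "y * y \<le> y * (1/3)" using assms by (intro mult_left_mono) auto
    hence "1 \<le> (1 + 3/2*y) * (1 - y)" by (simp add: algebra_simps)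
    thus ?thesis using assms by (simp add: field_simps)
  qed
  ultimately show ?thesis by simp
qed

lemma SD:
  assumes C: "0 \<le> C" and RC: "\<bar>R\<bar> \<le> C"
  shows "(Phi (R+1) (C+1) + Phi (R-1) (C+1))/2 - Phi R C \<le> 3/(2*(C+1))"
proof (cases "R \<le> 0")
  case True
  have p0: "Phi R C = 1" using True by (simp add: Phi_eq)
  have p2: "Phi (R-1) (C+1) = 1" using True by (simp add: Phi_eq)
  define y where "y = 1/(3*(C+1))"
  have y0: "0 \<le> y" "y \<le> 1/3" using C by (auto simp: y_def field_simps)
  have "(max 0 (R+1))\<^sup>2 \<le> 1" using True by (intro power_le_one) auto
  hence "(max 0 (R+1))\<^sup>2 / (3*(C+1)) \<le> y" unfolding y_def using C
    by (intro divide_right_mono) auto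
  hence p1: "Phi (R+1) (C+1) \<le> exp y" by (simp add: Phi_eq)
  have "exp y - 1 \<le> 3/2*y" using exp_small y0 by blast
  hence "(Phi (R+1) (C+1) + Phi (R-1) (C+1))/2 - Phi R C \<le> 3/4 * y"
    using p0 p1 p2 by simp
  also have "\<dots> \<le> 3/(2*(C+1))" using C by (simp add: y_def field_simps)
  finally show ?thesis .
next
  case False
  hence R0: "R > 0" by simp
  with RC have C0: "C > 0" by simp
  define c where "c = C + 1"
  have c0: "c > 0" "c \<ge> 1" using C by (auto simp: c_def)
  define a where "a = R\<^sup>2/(3*C)"
  define m where "m = (R\<^sup>2+1)/(3*c)"
  define b where "b = 2*R/(3*c)"
  define y where "y = m + b\<^sup>2/2 - a"
  have P0: "Phi R C = exp a" using R0 by (simp add: Phi_eq a_def)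
  have "(R+1)\<^sup>2/(3*c) = m + b" using c0 by (simp add: m_def b_def field_simps power2_eq_square)
  hence P1: "Phi (R+1) (C+1) = exp (m + b)" using R0 by (simp add: Phi_eq c_def)
  have "(max 0 (R-1))\<^sup>2 \<le> \<bar>R-1\<bar>\<^sup>2" by (intro power_mono) auto
  hence "(max 0 (R-1))\<^sup>2/(3*c) \<le> (R-1)\<^sup>2/(3*c)" using c0 by (intro divide_right_mono) auto
  also have "(R-1)\<^sup>2/(3*c) = m - b" using c0 by (simp add: m_def b_def field_simps power2_eq_square)
  finally have P2: "Phi (R-1) (C+1) \<le> exp (m - b)" by (simp add: Phi_eq c_def)
  have b0: "b \<ge> 0" using R0 c0 by (simp add: b_def)
  have "(exp (m+b) + exp (m-b))/2 = exp m * ((exp b + exp (-b))/2)"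
    by (simp add: algebra_simps flip: exp_add)
  also have "\<dots> \<le> exp m * exp (b\<^sup>2/2)" using cosh_le[OF b0] by (intro mult_left_mono) auto
  also have "\<dots> = exp a * exp y" by (simp add: y_def flip: exp_add)
  finally have m1: "(exp (m+b) + exp (m-b))/2 \<le> exp a * exp y" .
  have "(Phi (R+1) (C+1) + Phi (R-1) (C+1))/2 \<le> (exp (m+b) + exp (m-b))/2"
    using P1 P2 by simp
  hence main: "(Phi (R+1) (C+1) + Phi (R-1) (C+1))/2 \<le> exp a * exp y"
    using m1 by linarith
  have yeq: "y = (3*c*C - R\<^sup>2*(C+3))/(9*C*c\<^sup>2)"
  proof -
    have "y * (9*C*c\<^sup>2) = 3*C*c*(R\<^sup>2+1) + 2*R\<^sup>2*C - 3*c\<^sup>2*R\<^sup>2"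
      using C0 c0 by (simp add: y_def m_def b_def a_def field_simps power2_eq_square)
    also have "\<dots> = 3*c*C - R\<^sup>2*(C+3)"
      by (simp add: c_def power2_eq_square algebra_simps)
    finally show ?thesis using C0 c0 by (simp add: field_simps)
  qed
  show ?thesis
  proof (cases "y \<le> 0")
    case True
    hence "exp a * exp y \<le> exp a * 1" by (intro mult_left_mono) auto
    with main P0 have "(Phi (R+1) (C+1) + Phi (R-1) (C+1))/2 - Phi R C \<le> 0" by linarith
    also have "0 \<le> 3/(2*(C+1))" using C by simp
    finally show ?thesis .
  next
    case False
    hence "0 < 3*c*C - R\<^sup>2*(C+3)" using yeq C0 c0
      by (metis divide_nonpos_pos mult_pos_pos not_le zero_less_numeral zero_less_power)
    hence "R\<^sup>2*(C+3) < 3*c*C" by simp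
    moreover have "3*c*C \<le> 3*C*(C+3)" using C by (simp add: c_def algebra_simps)
    ultimately have "R\<^sup>2*(C+3) < 3*C*(C+3)" by linarith
    hence "R\<^sup>2 < 3*C" using C by (simp add: mult_less_cancel_right)
    hence a1: "a \<le> 1" using C0 by (simp add: a_def field_simps)
    have "y \<le> (3*c*C)/(9*C*c\<^sup>2)" unfolding yeq using C0 c0
      by (intro divide_right_mono) auto
    also have "\<dots> = 1/(3*c)" using C0 c0 by (simp add: field_simps power2_eq_square)
    finally have y1: "y \<le> 1/(3*c)" .
    hence y3: "y \<le> 1/3" using c0 by (smt (verit) divide_left_mono mult_pos_pos zero_less_numeral)
    have ey: "exp y - 1 \<le> 3/2*y" using exp_small[of y] False y3 by simp
    have ea: "exp a \<le> 3" using a1 exp_le by (meson exp_le_cancel_iff order_trans)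
    have "(Phi (R+1) (C+1) + Phi (R-1) (C+1))/2 - Phi R C \<le> exp a * (exp y - 1)"
      using main P0 by (simp add: algebra_simps)
    also have "\<dots> \<le> 3 * (3/2*y)" using ea ey False
      by (intro mult_mono) auto
    also have "\<dots> \<le> 3 * (3/2*(1/(3*c)))" using y1 by simp
    also have "\<dots> = 3/(2*(C+1))" using C by (simp add: c_def field_simps)
    finally show ?thesis .
  qed
qed

lemma titu:
  fixes xa yb pu qv lm :: real
  assumes pu: "pu > 0" and qv: "qv > 0" and lm: "0 \<le> lm" "lm \<le> 1"
  shows "(lm*xa + (1-lm)*yb)\<^sup>2 / (lm*pu + (1-lm)*qv) \<le> lm*xa\<^sup>2/pu + (1-lm)*yb\<^sup>2/qv"
proof -
  define W where "W = lm*pu + (1-lm)*qv"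
  have W: "W > 0" unfolding W_def using pu qv lm
    by (cases "lm = 0") (auto intro: add_pos_nonneg mult_pos_pos)
  have id: "(lm*xa\<^sup>2*qv + (1-lm)*yb\<^sup>2*pu) * W - (lm*xa + (1-lm)*yb)\<^sup>2 * (pu*qv) = lm*(1-lm)*(xa*qv - yb*pu)\<^sup>2"
    unfolding W_def by (simp add: power2_eq_square algebra_simps)
  have "0 \<le> lm*(1-lm)*(xa*qv - yb*pu)\<^sup>2" using lm by simp
  hence ineq: "(lm*xa + (1-lm)*yb)\<^sup>2 * (pu*qv) \<le> (lm*xa\<^sup>2*qv + (1-lm)*yb\<^sup>2*pu) * W" using id by linarith
  have "(lm*xa + (1-lm)*yb)\<^sup>2 / W = (lm*xa + (1-lm)*yb)\<^sup>2 * (pu*qv) / (W*(pu*qv))" using pu qv by simp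
  also have "\<dots> \<le> (lm*xa\<^sup>2*qv + (1-lm)*yb\<^sup>2*pu) * W / (W*(pu*qv))"
    using ineq W pu qv by (intro divide_right_mono) auto
  also have "\<dots> = lm*xa\<^sup>2/pu + (1-lm)*yb\<^sup>2/qv" using W pu qv by (simp add: field_simps)
  finally show ?thesis unfolding W_def .
qed

lemma CV:
  assumes C: "0 \<le> C" and RC: "\<bar>R\<bar> \<le> C" and al: "0 \<le> al" "al \<le> 1"
  shows "Phi (R + al*d) (C + al) \<le> (1-al) * Phi R C + al * Phi (R+d) (C+1)"
proof -
  define x0 where "x0 = max 0 R"
  define x1 where "x1 = max 0 (R+d)"
  define p where "p = max 0 (R + al*d)"
  define q0 where "q0 = x0\<^sup>2/(3*C)"
  define q1 where "q1 = x1\<^sup>2/(3*(C+1))"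
  define q where "q = p\<^sup>2/(3*(C+al))"
  have "p \<le> (1-al)*x0 + al*x1"
  proof -
    have "R + al*d = (1-al)*R + al*(R+d)" by (simp add: algebra_simps)
    moreover have "(1-al)*R \<le> (1-al)*x0" using al by (intro mult_left_mono) (auto simp: x0_def)
    moreover have "al*(R+d) \<le> al*x1" using al by (intro mult_left_mono) (auto simp: x1_def)
    moreover have "0 \<le> (1-al)*x0 + al*x1" using al by (auto simp: x0_def x1_def)
    ultimately show ?thesis unfolding p_def by linarith
  qed
  moreover have "0 \<le> p" by (simp add: p_def)
  ultimately have pp: "p\<^sup>2 \<le> ((1-al)*x0 + al*x1)\<^sup>2" by (intro power_mono) auto
  have qq: "q \<le> (1-al)*q0 + al*q1"
  proof (cases "C = 0")
    case True
    hence "x0 = 0" using RC by (simp add: x0_def)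
    hence q0: "q0 = 0" by (simp add: q0_def)
    show ?thesis
    proof (cases "al = 0")
      case True thus ?thesis using \<open>C = 0\<close> \<open>x0 = 0\<close> by (simp add: q_def q0_def p_def x0_def)
    next
      case False
      hence a0: "al > 0" using al by simp
      have "p\<^sup>2 \<le> (al*x1)\<^sup>2" using pp \<open>x0 = 0\<close> by simp
      moreover have "q = p\<^sup>2/(3*al)" by (simp add: q_def True)
      ultimately have "q \<le> (al*x1)\<^sup>2/(3*al)" using a0
        by (simp add: divide_right_mono)
      also have "\<dots> = al * q1" using True a0 by (simp add: q1_def power2_eq_square)
      finally show ?thesis using q0 by simp
    qed
  next
    case False
    hence C0: "C > 0" using C by simp
    have "q \<le> ((1-al)*x0 + al*x1)\<^sup>2/(3*(C+al))" unfolding q_def using pp C0 al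
      by (intro divide_right_mono) auto
    also have "\<dots> = (1/3) * (((1-al)*x0 + al*x1)\<^sup>2 / ((1-al)*C + al*(C+1)))"
      by (simp add: algebra_simps)
    also have "\<dots> \<le> (1/3) * ((1-al)*x0\<^sup>2/C + al*x1\<^sup>2/(C+1))"
      using titu[of C "C+1" "1-al" x0 x1] C0 al by (intro mult_left_mono) (auto simp: algebra_simps)
    also have "\<dots> = (1-al)*q0 + al*q1" using C0 by (simp add: q0_def q1_def algebra_simps) (simp add: field_simps)
    finally show ?thesis .
  qed
  have "Phi (R + al*d) (C + al) = exp q" by (simp add: Phi_eq q_def p_def)
  also have "\<dots> \<le> exp ((1-al)*q0 + al*q1)" using qq by simp
  also have "\<dots> \<le> (1-al) * exp q0 + al * exp q1"
    using convex_onD[OF exp_convex, of al q0 q1] al by simp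
  also have "\<dots> = (1-al) * Phi R C + al * Phi (R+d) (C+1)"
    by (simp add: Phi_eq q0_def q1_def x0_def x1_def)
  finally show ?thesis .
qed

lemma ln_lower: assumes "0 \<le> y" "y \<le> (1::real)" shows "y/2 \<le> ln (1 + y)"
proof -
  have "ln (1/(1+y)) \<le> 1/(1+y) - 1" using assms by (intro ln_le_minus_one) auto
  hence "- ln (1+y) \<le> 1/(1+y) - 1" using assms by (simp add: ln_div)
  moreover have "1/(1+y) - 1 \<le> - y/2"
  proof -
    have "y*y \<le> y*1" using assms by (intro mult_left_mono) auto
    thus ?thesis using assms by (simp add: field_simps)
  qed
  ultimately show ?thesis by linarith
qed

lemma key:
  assumes RC: "\<bar>R\<bar> \<le> C" and r: "\<bar>r\<bar> \<le> 1"
  shows "Phi (R + r) (C + \<bar>r\<bar>) - 3 * ln (1 + (C + \<bar>r\<bar>)) \<le> Phi R C - 3 * ln (1 + C) + anh_weight R C * r"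
proof -
  have C: "0 \<le> C" using RC by linarith
  define K where "K = 3/(2*(C+1))"
  define P0 where "P0 = Phi R C"
  define P1 where "P1 = Phi (R+1) (C+1)"
  define P2 where "P2 = Phi (R-1) (C+1)"
  have w: "anh_weight R C = (P1 - P2)/2" by (simp add: anh_weight_def P1_def P2_def)
  have sd: "(P1 + P2)/2 - P0 \<le> K" using SD[OF C RC] by (simp add: P0_def P1_def P2_def K_def)
  have step1: "Phi (R + r) (C + \<bar>r\<bar>) \<le> P0 + anh_weight R C * r + \<bar>r\<bar> * K"
  proof (cases "r \<ge> 0")
    case True
    have "Phi (R + r*1) (C + r) \<le> (1-r) * P0 + r * P1"
      using CV[OF C RC, of r 1] True r by (simp add: P0_def P1_def)
    also have "\<dots> = P0 + r * (P1 - P0)" by (simp add: algebra_simps)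
    also have "\<dots> \<le> P0 + r * ((P1 - P2)/2 + K)"
    proof -
      have "P1 - P0 \<le> (P1 - P2)/2 + K" using sd by (simp add: field_simps)
      thus ?thesis using True by (intro add_left_mono mult_left_mono) auto
    qed
    finally have "Phi (R + r) (C + \<bar>r\<bar>) \<le> P0 + r * ((P1 - P2)/2 + K)" using True by simp
    moreover have "r * ((P1 - P2)/2 + K) = anh_weight R C * r + \<bar>r\<bar> * K"
      using True by (simp add: w algebra_simps)
    ultimately show ?thesis by simp
  next
    case False
    have "Phi (R + (-r)*(-1)) (C + (-r)) \<le> (1-(-r)) * P0 + (-r) * P2"
      using CV[OF C RC, of "-r" "-1"] False r by (simp add: P0_def P2_def)
    also have "\<dots> = P0 + (-r) * (P2 - P0)" by (simp add: algebra_simps)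
    also have "\<dots> \<le> P0 + (-r) * (-(P1 - P2)/2 + K)"
    proof -
      have "P2 - P0 \<le> -(P1 - P2)/2 + K" using sd by (simp add: field_simps)
      thus ?thesis using False by (intro add_left_mono mult_left_mono) auto
    qed
    finally have "Phi (R + r) (C + \<bar>r\<bar>) \<le> P0 + (-r) * (-(P1 - P2)/2 + K)" using False by simp
    moreover have "(-r) * (-(P1 - P2)/2 + K) = anh_weight R C * r + \<bar>r\<bar> * K"
      using False by (simp add: w algebra_simps)
    ultimately show ?thesis by simp
  qed
  define y where "y = \<bar>r\<bar>/(1+C)"
  have y: "0 \<le> y" "y \<le> 1" using r C by (auto simp: y_def field_simps)
  have "1 + (C + \<bar>r\<bar>) = (1+C) * (1+y)" using C by (simp add: y_def field_simps)
  hence "ln (1 + (C + \<bar>r\<bar>)) = ln ((1+C) * (1+y))" by simp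
  also have "\<dots> = ln (1+C) + ln (1+y)" using C y by (simp add: ln_mult)
  finally have lnid: "ln (1 + (C + \<bar>r\<bar>)) = ln (1+C) + ln (1+y)" .
  have "\<bar>r\<bar> * K = 3 * (y/2)" by (simp add: K_def y_def field_simps)
  also have "\<dots> \<le> 3 * ln (1+y)" using ln_lower[OF y] by simp
  finally have "\<bar>r\<bar> * K \<le> 3 * ln (1+y)" .
  thus ?thesis using step1 lnid by (simp add: P0_def)
qed



lemma sum_split_ivl:
  fixes g :: "nat \<Rightarrow> real"
  assumes "p \<le> n"
  shows "(\<Sum>t\<in>{a+1..a+n}. g t) = (\<Sum>t\<in>{a+1..a+p}. g t) + (\<Sum>t\<in>{a+p+1..a+n}. g t)"
proof -
  have "{a+1..a+n} = {a+1..a+p} \<union> {a+p+1..a+n}" using assms by auto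
  moreover have "{a+1..a+p} \<inter> {a+p+1..a+n} = {}" by auto
  ultimately show ?thesis by (simp add: sum.union_disjoint)
qed

lemma sqrt_step:
  fixes P n' :: nat
  assumes "n' \<le> P"
  shows "sqrt P + 3 * sqrt n' \<le> 3 * sqrt (P + n')"
proof -
  define x where "x = sqrt P"
  define y where "y = sqrt n'"
  have xy: "0 \<le> y" "y \<le> x" using assms by (auto simp: x_def y_def)
  have "x * y \<le> x * x" using xy by (intro mult_left_mono) auto
  moreover have "0 \<le> x * x" by simp
  moreover have "(x + 3*y)\<^sup>2 = x*x + 6*(x*y) + 9*(y*y)" by (simp add: power2_eq_square algebra_simps)
  moreover have "9 * (x\<^sup>2 + y\<^sup>2) = 9*(x*x) + 9*(y*y)" by (simp add: power2_eq_square algebra_simps)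
  ultimately have "(x + 3*y)\<^sup>2 \<le> 9 * (x\<^sup>2 + y\<^sup>2)" by linarith
  also have "x\<^sup>2 + y\<^sup>2 = P + n'" by (simp add: x_def y_def)
  finally have "(x + 3*y)\<^sup>2 \<le> 9 * real (P + n')" .
  hence "sqrt ((x + 3*y)\<^sup>2) \<le> sqrt (9 * real (P + n'))" by (rule real_sqrt_le_mono)
  moreover have "sqrt ((x + 3*y)\<^sup>2) = x + 3*y" using xy by simp
  moreover have "sqrt (9 * real (P + n')) = 3 * sqrt (real (P + n'))"
    by (simp only: real_sqrt_mult) simp
  ultimately show ?thesis by (simp add: x_def y_def)
qed

lemma pow_interval: "n \<ge> (1::nat) \<Longrightarrow> \<exists>j. 2^j \<le> n \<and> n < 2^(Suc j)"
  using ex_power_ivl1[of 2 n] by auto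

locale blocks =
  fixes g :: "nat \<Rightarrow> real" and A :: real and s0 e0 :: nat
  assumes A: "0 \<le> A"
  and H: "\<And>k m. s0 \<le> m*2^k+1 \<Longrightarrow> (m+1)*2^k \<le> e0 \<Longrightarrow> (\<Sum>t\<in>{m*2^k+1..(m+1)*2^k}. g t) \<le> A * sqrt (2^k)"
begin

lemma RA:
  "(\<forall>j. 2^j \<le> n \<longrightarrow> 2^j dvd a) \<Longrightarrow> s0 \<le> a+1 \<Longrightarrow> a+n \<le> e0 \<Longrightarrow> (\<Sum>t\<in>{a+1..a+n}. g t) \<le> 3 * A * sqrt n"
proof (induction n arbitrary: a rule: less_induct)
  case (less n)
  show ?case
  proof (cases "n = 0")
    case True thus ?thesis by simp
  next
    case False
    then obtain j where j: "2^j \<le> n" "n < 2^(Suc j)" using pow_interval[of n] by auto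
    define n' where "n' = n - 2^j"
    have n'lt: "n' < n" using j False by (simp add: n'_def)
    have n'le: "n' \<le> 2^j" using j by (simp add: n'_def)
    obtain m where m: "a = m * 2^j" using less.prems(1) j by (metis dvd_def mult.commute)
    have blk: "(\<Sum>t\<in>{a+1..a+2^j}. g t) \<le> A * sqrt (2^j)"
      using H[of m j] less.prems j m by (simp add: algebra_simps)
    have al: "\<forall>i. 2^i \<le> n' \<longrightarrow> 2^i dvd (a + 2^j)"
    proof (intro allI impI)
      fix i assume "2^i \<le> n'"
      moreover have "n < 2*2^j" using j by simp
      ultimately have "2^i < (2::nat)^j" using j unfolding n'_def by linarith
      hence "i < j" by simp
      hence "(2::nat)^i dvd 2^j" by (simp add: le_imp_power_dvd)
      moreover have "(2::nat)^i dvd a" using less.prems(1) \<open>2^i \<le> n'\<close> n'lt by auto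
      ultimately show "2^i dvd (a + 2^j)" by simp
    qed
    have rest: "(\<Sum>t\<in>{(a+2^j)+1..(a+2^j)+n'}. g t) \<le> 3 * A * sqrt n'"
      using less.IH[OF n'lt al] less.prems j by (simp add: n'_def)
    have "(\<Sum>t\<in>{a+1..a+n}. g t) = (\<Sum>t\<in>{a+1..a+2^j}. g t) + (\<Sum>t\<in>{a+2^j+1..a+n}. g t)"
      using sum_split_ivl[OF j(1)] by simp
    also have "{a+2^j+1..a+n} = {(a+2^j)+1..(a+2^j)+n'}" using j by (simp add: n'_def)
    also have "(\<Sum>t\<in>{a+1..a+2^j}. g t) + (\<Sum>t\<in>{(a+2^j)+1..(a+2^j)+n'}. g t) \<le> A * sqrt (2^j) + 3 * A * sqrt n'"
      using blk rest by simp
    also have "\<dots> = A * (sqrt (real (2^j)) + 3 * sqrt n')" by (simp add: algebra_simps)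
    also have "\<dots> \<le> A * (3 * sqrt (real (2^j + n')))"
      using sqrt_step[OF n'le] A by (intro mult_left_mono) auto
    also have "2^j + n' = n" using j by (simp add: n'_def)
    finally show ?thesis by simp
  qed
qed

lemma LA:
  "(\<forall>j. 2^j \<le> n \<longrightarrow> 2^j dvd (a+n)) \<Longrightarrow> s0 \<le> a+1 \<Longrightarrow> a+n \<le> e0 \<Longrightarrow> (\<Sum>t\<in>{a+1..a+n}. g t) \<le> 3 * A * sqrt n"
proof (induction n arbitrary: a rule: less_induct)
  case (less n)
  show ?case
  proof (cases "n = 0")
    case True thus ?thesis by simp
  next
    case False
    then obtain j where j: "2^j \<le> n" "n < 2^(Suc j)" using pow_interval[of n] by auto
    define n' where "n' = n - 2^j"
    have n'lt: "n' < n" using j False by (simp add: n'_def)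
    have n'le: "n' \<le> 2^j" using j by (simp add: n'_def)
    obtain m where m: "a + n = (m+1) * 2^j"
    proof -
      obtain q where q: "a + n = q * 2^j" using less.prems(1) j by (metis dvd_def mult.commute)
      have "q \<noteq> 0" using q False by (cases q) auto
      then obtain m where "q = m + 1" by (metis Suc_eq_plus1 not0_implies_Suc)
      thus ?thesis using q that by blast
    qed
    have mm: "m * 2^j = a + n'" using m j by (simp add: n'_def algebra_simps)
    have blk: "(\<Sum>t\<in>{a+n'+1..a+n}. g t) \<le> A * sqrt (2^j)"
      using H[of m j] less.prems j m mm by (simp add: algebra_simps)
    have al: "\<forall>i. 2^i \<le> n' \<longrightarrow> 2^i dvd (a + n')"
    proof (intro allI impI)
      fix i assume "2^i \<le> n'"
      moreover have "n < 2*2^j" using j by simp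
      ultimately have "2^i < (2::nat)^j" using j unfolding n'_def by linarith
      hence "i < j" by simp
      hence "(2::nat)^i dvd 2^j" by (simp add: le_imp_power_dvd)
      thus "2^i dvd (a + n')" using mm by (metis dvd_mult)
    qed
    have rest: "(\<Sum>t\<in>{a+1..a+n'}. g t) \<le> 3 * A * sqrt n'"
      using less.IH[OF n'lt al] less.prems n'lt by simp
    have "(\<Sum>t\<in>{a+1..a+n}. g t) = (\<Sum>t\<in>{a+1..a+n'}. g t) + (\<Sum>t\<in>{a+n'+1..a+n}. g t)"
      using sum_split_ivl[of n' n] n'lt by simp
    also have "\<dots> \<le> 3 * A * sqrt n' + A * sqrt (2^j)"
      using blk rest by simp
    also have "\<dots> = A * (sqrt (real (2^j)) + 3 * sqrt n')" by (simp add: algebra_simps)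
    also have "\<dots> \<le> A * (3 * sqrt (real (2^j + n')))"
      using sqrt_step[OF n'le] A by (intro mult_left_mono) auto
    also have "2^j + n' = n" using j by (simp add: n'_def)
    finally show ?thesis by simp
  qed
qed

end

lemma partition_bound:
  fixes g :: "nat \<Rightarrow> real"
  assumes A: "0 \<le> A" and s: "1 \<le> s" and tau: "1 \<le> \<tau>"
  and H: "\<And>k m. s \<le> m*2^k+1 \<Longrightarrow> (m+1)*2^k \<le> s + \<tau> - 1 \<Longrightarrow> (\<Sum>t\<in>{m*2^k+1..(m+1)*2^k}. g t) \<le> A * sqrt (2^k)"
  shows "(\<Sum>t\<in>{s..s + \<tau> - 1}. g t) \<le> 8 * A * sqrt \<tau>"
proof -
  interpret blocks g A s "s + \<tau> - 1" using A H by unfold_locales auto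
  define e where "e = s + \<tau> - 1"
  obtain J where J: "2^J \<le> \<tau>" "\<tau> < 2^(Suc J)" using pow_interval[OF tau] by auto
  define b where "b = 2^J * (e div 2^J)"
  have "e div 2^J * 2^J + e mod 2^J = e" by (rule div_mult_mod_eq)
  moreover have "e mod 2^J < 2^J" by simp
  moreover have "b = e div 2^J * 2^J" by (simp add: b_def mult.commute)
  ultimately have b1: "b \<le> e" "e < b + 2^J" by linarith+
  hence bs: "s \<le> b + 1" using J by (simp add: e_def)
  have alg: "\<And>n i. n \<le> \<tau> \<Longrightarrow> 2^i \<le> n \<Longrightarrow> 2^i dvd b"
  proof -
    fix n i assume "n \<le> \<tau>" "2^i \<le> (n::nat)"
    hence "2^i < (2::nat)^(Suc J)" using J by simp
    hence "(2::nat)^i < 2^(Suc J)" by simp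
    hence "i < Suc J" using power_less_imp_less_exp by (metis one_less_numeral_iff semiring_norm(76))
    hence "i \<le> J" by simp
    hence "(2::nat)^i dvd 2^J" by (simp add: le_imp_power_dvd)
    thus "2^i dvd b" by (simp add: b_def)
  qed
  define n1 where "n1 = b + 1 - s"
  define n2 where "n2 = e - b"
  have n1t: "n1 \<le> \<tau>" using b1 bs tau by (simp add: n1_def e_def)
  have n2t: "n2 \<le> \<tau>" using b1 J by (simp add: n2_def)
  have L: "(\<Sum>t\<in>{(s-1)+1..(s-1)+n1}. g t) \<le> 3 * A * sqrt n1"
    using LA[of n1 "s-1"] alg[OF n1t] s bs b1 by (simp add: n1_def e_def)
  have R: "(\<Sum>t\<in>{b+1..b+n2}. g t) \<le> 3 * A * sqrt n2"
    using RA[of n2 b] alg[OF n2t] s bs b1 by (simp add: n2_def e_def)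
  have "(s-1)+1 = s" "(s-1)+(e+1-s) = e" using s tau by (auto simp: e_def)
  hence "(\<Sum>t\<in>{s..e}. g t) = (\<Sum>t\<in>{(s-1)+1..(s-1)+(e+1-s)}. g t)" by simp
  also have "\<dots> = (\<Sum>t\<in>{(s-1)+1..(s-1)+n1}. g t) + (\<Sum>t\<in>{(s-1)+n1+1..(s-1)+(e+1-s)}. g t)"
    using sum_split_ivl[of n1 "e+1-s"] b1 bs by (simp add: n1_def)
  also have "{(s-1)+n1+1..(s-1)+(e+1-s)} = {b+1..b+n2}" using b1 bs s by (simp add: n1_def n2_def)
  finally have "(\<Sum>t\<in>{s..e}. g t) \<le> 3 * A * sqrt n1 + 3 * A * sqrt n2" using L R by simp
  also have "\<dots> \<le> 3 * A * sqrt \<tau> + 3 * A * sqrt \<tau>"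
    using n1t n2t A by (intro add_mono mult_left_mono) auto
  also have "\<dots> \<le> 8 * A * sqrt \<tau>" using A by simp
  finally show ?thesis by (simp add: e_def)
qed



locale aod =
  fixes \<Omega> :: "'a::euclidean_space set"
    and f :: "nat \<Rightarrow> 'a \<Rightarrow> real"
    and grad :: "nat \<Rightarrow> 'a \<Rightarrow> 'a"
    and D G :: real
    and T :: nat
    and init :: "nat \<Rightarrow> 'a"
    and w :: "nat \<Rightarrow> 'a"
  assumes T1: "1 \<le> T"
    and convex: "convex \<Omega>"
    and closed: "closed \<Omega>"
    and zero_in: "0 \<in> \<Omega>"
    and fconv: "\<And>t. t \<in> {1..T} \<Longrightarrow> convex_on \<Omega> (f t)"
    and subgrad: "\<And>t u v. t \<in> {1..T} \<Longrightarrow> u \<in> \<Omega> \<Longrightarrow> v \<in> \<Omega> \<Longrightarrow>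
                    f t v \<ge> f t u + grad t u \<bullet> (v - u)"
    and A1: "\<And>t u. t \<in> {1..T} \<Longrightarrow> u \<in> \<Omega> \<Longrightarrow> norm (grad t u) \<le> G"
    and A2: "\<And>u v. u \<in> \<Omega> \<Longrightarrow> v \<in> \<Omega> \<Longrightarrow> norm (u - v) \<le> D"
    and A3: "\<And>t u. t \<in> {1..T} \<Longrightarrow> u \<in> \<Omega> \<Longrightarrow> 0 \<le> f t u \<and> f t u \<le> 1"
    and init_in: "\<And>k. init k \<in> \<Omega>"
    and plays: "AOD_plays T \<Omega> f grad D G init w"
begin

definition "x k i t = expert_pt \<Omega> grad D G init k i t"
definition "r k i t = f t (w t) - f t (x k i t)"
definition "Rb k i t = (\<Sum>u\<in>{ivl_lo k i..<t}. r k i u)"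
definition "Cb k i t = (\<Sum>u\<in>{ivl_lo k i..<t}. \<bar>r k i u\<bar>)"
definition "W k i t = anh_weight (Rb k i t) (Cb k i t)"
definition "Z t = (\<Sum>(k, i)\<in>active T t. W k i t)"

lemma nonempty: "\<Omega> \<noteq> {}" using zero_in by auto

lemma D0: "0 \<le> D" using A2[OF zero_in zero_in] by simp
lemma G0: "0 \<le> G" using A1[of 1 0] zero_in T1 by (auto intro: order_trans[OF norm_ge_zero])

lemma cp_in: "closest_point \<Omega> y \<in> \<Omega>"
  using closest_point_in_set[OF closed nonempty] .

lemma x_in: "x k i t \<in> \<Omega>"
  unfolding x_def
proof (induction t arbitrary: i)
  case 0 thus ?case using init_in by simp
next
  case (Suc t) thus ?case using init_in cp_in by (simp add: ogd_step_def)
qed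

lemma plays_eq: "t \<in> {1..T} \<Longrightarrow> w t = (\<Sum>(k, i)\<in>active T t. (W k i t / Z t) *\<^sub>R x k i t)"
  using plays unfolding AOD_plays_def Let_def W_def Z_def Rb_def Cb_def r_def x_def
  by blast

lemma active_sub: "active T t \<subseteq> {..T} \<times> {..t}"
proof
  fix z assume "z \<in> active T t"
  then obtain k i where z: "z = (k,i)" "2^k \<le> T" "1 \<le> i" "(i-1)*2^k+1 \<le> t"
    by (auto simp: active_def covering_def ivl_lo_def)
  have "k < 2^k" by simp
  hence "k \<le> T" using z(2) by linarith
  moreover have "i - 1 < t"
  proof -
    have "(i-1) * 1 \<le> (i-1)*2^k" by (intro mult_left_mono) simp_all
    thus ?thesis using z(4) by linarith
  qed
  ultimately show "z \<in> {..T} \<times> {..t}" using z by auto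
qed

lemma finite_active: "finite (active T t)"
  using active_sub by (rule finite_subset) auto

lemma anh_weight_nonneg: "0 \<le> C \<Longrightarrow> 0 \<le> anh_weight R C"
proof -
  assume C: "0 \<le> C"
  have "(max 0 (R-1))\<^sup>2 \<le> (max 0 (R+1))\<^sup>2" by (intro power_mono) auto
  hence "(max 0 (R-1))\<^sup>2 / (3*(C+1)) \<le> (max 0 (R+1))\<^sup>2 / (3*(C+1))"
    using C by (intro divide_right_mono) auto
  thus ?thesis by (simp add: anh_weight_def Phi_eq)
qed

lemma Cb_nonneg: "0 \<le> Cb k i t" unfolding Cb_def by (simp add: sum_nonneg)

lemma W_nonneg: "0 \<le> W k i t" unfolding W_def using Cb_nonneg by (rule anh_weight_nonneg)

lemma active_new: "1 \<le> t \<Longrightarrow> t \<le> T \<Longrightarrow> (0, t) \<in> active T t"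
  by (simp add: active_def covering_def ivl_lo_def ivl_hi_def)

lemma W_new: "W 0 t t > 0"
proof -
  have "W 0 t t = anh_weight 0 0" by (simp add: W_def Rb_def Cb_def ivl_lo_def)
  also have "\<dots> = (exp (1/3) - 1)/2" by (simp add: anh_weight_def Phi_eq)
  also have "\<dots> > 0" by simp
  finally show ?thesis .
qed

lemma Z_pos: "t \<in> {1..T} \<Longrightarrow> Z t > 0"
proof -
  assume t: "t \<in> {1..T}"
  have "W 0 t t \<le> (\<Sum>(k, i)\<in>active T t. W k i t)"
    using member_le_sum[of "(0,t)" "active T t" "\<lambda>(k,i). W k i t"] active_new t finite_active W_nonneg
    by auto
  thus ?thesis using W_new[of t] unfolding Z_def by linarith
qed

lemma w_in: "t \<in> {1..T} \<Longrightarrow> w t \<in> \<Omega>"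
proof -
  assume t: "t \<in> {1..T}"
  have "(\<Sum>z\<in>active T t. (\<lambda>(k,i). W k i t / Z t) z *\<^sub>R (\<lambda>(k,i). x k i t) z) \<in> \<Omega>"
  proof (rule convex_sum[OF finite_active convex])
    show "(\<Sum>z\<in>active T t. (\<lambda>(k,i). W k i t / Z t) z) = 1"
      using Z_pos[OF t] by (simp add: Z_def sum_divide_distrib[symmetric] case_prod_beta')
    show "\<And>z. z \<in> active T t \<Longrightarrow> 0 \<le> (\<lambda>(k,i). W k i t / Z t) z"
      using Z_pos[OF t] W_nonneg by (auto)
    show "\<And>z. z \<in> active T t \<Longrightarrow> (\<lambda>(k,i). x k i t) z \<in> \<Omega>" using x_in by auto
  qed
  moreover have "(\<Sum>z\<in>active T t. (\<lambda>(k,i). W k i t / Z t) z *\<^sub>R (\<lambda>(k,i). x k i t) z)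
      = (\<Sum>(k, i)\<in>active T t. (W k i t / Z t) *\<^sub>R x k i t)"
    by (simp add: case_prod_beta')
  ultimately show ?thesis using plays_eq[OF t] by simp
qed

lemma r_bound: "t \<in> {1..T} \<Longrightarrow> \<bar>r k i t\<bar> \<le> 1"
  using A3[of t "w t"] A3[of t "x k i t"] w_in x_in unfolding r_def by force

lemma jensen: "t \<in> {1..T} \<Longrightarrow> (\<Sum>(k, i)\<in>active T t. W k i t * r k i t) \<le> 0"
proof -
  assume t: "t \<in> {1..T}"
  have Zp: "Z t > 0" using Z_pos[OF t] .
  have "f t (\<Sum>z\<in>active T t. (\<lambda>(k,i). W k i t / Z t) z *\<^sub>R (\<lambda>(k,i). x k i t) z)
      \<le> (\<Sum>z\<in>active T t. (\<lambda>(k,i). W k i t / Z t) z * f t ((\<lambda>(k,i). x k i t) z))"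
  proof (rule convex_on_sum[OF finite_active _ fconv[OF t]])
    show "active T t \<noteq> {}" using active_new t by auto
    show "(\<Sum>z\<in>active T t. (\<lambda>(k,i). W k i t / Z t) z) = 1"
      using Zp by (simp add: Z_def sum_divide_distrib[symmetric] case_prod_beta')
    show "\<And>z. z \<in> active T t \<Longrightarrow> 0 \<le> (\<lambda>(k,i). W k i t / Z t) z"
      using Zp W_nonneg by (auto)
    show "\<And>z. z \<in> active T t \<Longrightarrow> (\<lambda>(k,i). x k i t) z \<in> \<Omega>" using x_in by auto
  qed
  also have "(\<Sum>z\<in>active T t. (\<lambda>(k,i). W k i t / Z t) z *\<^sub>R (\<lambda>(k,i). x k i t) z) = w t"
    using plays_eq[OF t] by (simp add: case_prod_beta')
  finally have j: "f t (w t) \<le> (\<Sum>z\<in>active T t. (W (fst z) (snd z) t / Z t) * f t (x (fst z) (snd z) t))"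
    by (simp add: case_prod_beta')
  define S2 where "S2 = (\<Sum>z\<in>active T t. (W (fst z) (snd z) t / Z t) * f t (x (fst z) (snd z) t))"
  have "(\<Sum>(k, i)\<in>active T t. W k i t * r k i t)
      = (\<Sum>z\<in>active T t. W (fst z) (snd z) t * f t (w t) - W (fst z) (snd z) t * f t (x (fst z) (snd z) t))"
    by (simp add: r_def case_prod_beta' right_diff_distrib)
  also have "\<dots> = (\<Sum>z\<in>active T t. W (fst z) (snd z) t) * f t (w t) - (\<Sum>z\<in>active T t. W (fst z) (snd z) t * f t (x (fst z) (snd z) t))"
    by (simp only: sum_subtractf sum_distrib_right)
  also have "(\<Sum>z\<in>active T t. W (fst z) (snd z) t) = Z t"
    by (simp add: Z_def case_prod_beta')
  also have "(\<Sum>z\<in>active T t. W (fst z) (snd z) t * f t (x (fst z) (snd z) t)) = Z t * S2"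
    using Zp by (simp add: S2_def sum_distrib_left)
  finally have "(\<Sum>(k, i)\<in>active T t. W k i t * r k i t) = Z t * (f t (w t) - S2)"
    by (simp add: right_diff_distrib)
  moreover have "Z t * (f t (w t) - S2) \<le> 0"
    using j Zp unfolding S2_def by (simp add: mult_nonneg_nonpos)
  ultimately show ?thesis by simp
qed


definition "Rs k i t = (\<Sum>u\<in>{ivl_lo k i..min t (ivl_hi k i)}. r k i u)"
definition "Cs k i t = (\<Sum>u\<in>{ivl_lo k i..min t (ivl_hi k i)}. \<bar>r k i u\<bar>)"
definition "E = {(k, i). (k, i) \<in> covering T \<and> ivl_lo k i \<le> T}"
definition "trm k i t = Phi (Rs k i t) (Cs k i t) - 3 * ln (1 + Cs k i t)"
definition "Pot t = (\<Sum>(k, i)\<in>E. trm k i t)"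

lemma lo_ge1: "1 \<le> ivl_lo k i" by (simp add: ivl_lo_def)

lemma E_sub: "E \<subseteq> {k. 2^k \<le> T} \<times> {1..T}"
proof
  fix z assume "z \<in> E"
  then obtain k i where z: "z = (k,i)" "2^k \<le> T" "1 \<le> i" "(i-1)*2^k+1 \<le> T"
    by (auto simp: E_def covering_def ivl_lo_def)
  have "(i-1) * 1 \<le> (i-1)*2^k" by (intro mult_left_mono) simp_all
  hence "i \<le> T" using z(3,4) by linarith
  thus "z \<in> {k. 2^k \<le> T} \<times> {1..T}" using z by auto
qed

lemma finK: "finite {k::nat. 2^k \<le> T}"
proof -
  have "{k::nat. 2^k \<le> T} \<subseteq> {..T}"
  proof
    fix k assume "k \<in> {k::nat. 2^k \<le> T}"
    hence h1: "2^k \<le> T" by simp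
    have h2: "k < 2^k" by simp
    from h1 h2 have "k \<le> T" by linarith
    thus "k \<in> {..T}" by simp
  qed
  thus ?thesis by (rule finite_subset) auto
qed

lemma finite_E: "finite E"
  using E_sub finK by (rule finite_subset[OF _ finite_cartesian_product]) auto

lemma active_sub_E: "t \<le> T \<Longrightarrow> active T t \<subseteq> E"
  by (auto simp: active_def E_def)

lemma Cs_nonneg: "0 \<le> Cs k i t" unfolding Cs_def by (simp add: sum_nonneg)

lemma Rs_le_Cs: "\<bar>Rs k i t\<bar> \<le> Cs k i t" unfolding Rs_def Cs_def by (rule sum_abs)

lemma Pot0: "Pot 0 = card E"
proof -
  have "\<And>k i. trm k i 0 = 1"
  proof -
    fix k i
    have "{ivl_lo k i..min 0 (ivl_hi k i)} = {}" using lo_ge1[of k i] by auto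
    thus "trm k i 0 = 1" by (simp add: trm_def Rs_def Cs_def Phi_def)
  qed
  thus ?thesis by (simp add: Pot_def case_prod_beta')
qed

lemma step_active:
  assumes a: "(k, i) \<in> active T t" and t: "t \<in> {1..T}"
  shows "trm k i t \<le> trm k i (t-1) + W k i t * r k i t"
proof -
  have lt: "ivl_lo k i \<le> t" "t \<le> ivl_hi k i" using a by (auto simp: active_def)
  have S: "{ivl_lo k i..min t (ivl_hi k i)} = insert t {ivl_lo k i..min (t-1) (ivl_hi k i)}"
    using lt t by auto
  have nt: "t \<notin> {ivl_lo k i..min (t-1) (ivl_hi k i)}" using t by auto
  have Rs: "Rs k i t = Rs k i (t-1) + r k i t" unfolding Rs_def S using nt by simp
  have Cs: "Cs k i t = Cs k i (t-1) + \<bar>r k i t\<bar>" unfolding Cs_def S using nt by simp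
  have "{ivl_lo k i..<t} = {ivl_lo k i..min (t-1) (ivl_hi k i)}" using lt t by auto
  hence Wt: "W k i t = anh_weight (Rs k i (t-1)) (Cs k i (t-1))"
    by (simp add: W_def Rb_def Cb_def Rs_def Cs_def)
  have "Phi (Rs k i (t-1) + r k i t) (Cs k i (t-1) + \<bar>r k i t\<bar>) - 3 * ln (1 + (Cs k i (t-1) + \<bar>r k i t\<bar>))
     \<le> Phi (Rs k i (t-1)) (Cs k i (t-1)) - 3 * ln (1 + Cs k i (t-1)) + anh_weight (Rs k i (t-1)) (Cs k i (t-1)) * r k i t"
    by (rule key[OF Rs_le_Cs r_bound[OF t]])
  thus ?thesis by (simp add: trm_def Rs Cs Wt)
qed

lemma step_inactive:
  assumes a: "(k, i) \<notin> active T t" and c: "(k, i) \<in> covering T"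
  shows "trm k i t = trm k i (t-1)"
proof -
  have "t < ivl_lo k i \<or> ivl_hi k i < t" using a c by (auto simp: active_def)
  hence eqS: "{ivl_lo k i..min t (ivl_hi k i)} = {ivl_lo k i..min (t-1) (ivl_hi k i)}"
    by (elim disjE) auto
  show ?thesis unfolding trm_def Rs_def Cs_def eqS ..
qed

lemma Pot_step:
  assumes t: "t \<in> {1..T}"
  shows "Pot t \<le> Pot (t-1)"
proof -
  have "Pot t \<le> (\<Sum>z\<in>E. trm (fst z) (snd z) (t-1) + (if z \<in> active T t then W (fst z) (snd z) t * r (fst z) (snd z) t else 0))"
    unfolding Pot_def case_prod_beta'
  proof (rule sum_mono)
    fix z assume zE: "z \<in> E"
    show "trm (fst z) (snd z) t \<le> trm (fst z) (snd z) (t-1) + (if z \<in> active T t then W (fst z) (snd z) t * r (fst z) (snd z) t else 0)"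
    proof (cases "z \<in> active T t")
      case True thus ?thesis using step_active[of "fst z" "snd z" t] t by simp
    next
      case False
      have "(fst z, snd z) \<in> covering T" using zE by (auto simp: E_def)
      thus ?thesis using step_inactive[of "fst z" "snd z" t] False by simp
    qed
  qed
  also have "\<dots> = Pot (t-1) + (\<Sum>z\<in>E \<inter> active T t. W (fst z) (snd z) t * r (fst z) (snd z) t)"
    by (simp add: sum.distrib Pot_def case_prod_beta' sum.inter_restrict[OF finite_E])
  also have "E \<inter> active T t = active T t" using active_sub_E[of t] t by auto
  also have "(\<Sum>z\<in>active T t. W (fst z) (snd z) t * r (fst z) (snd z) t) \<le> 0"
    using jensen[OF t] by (simp add: case_prod_beta')
  finally show ?thesis by simp
qed

lemma Pot_bound: "t \<le> T \<Longrightarrow> Pot t \<le> card E"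
proof (induction t)
  case 0 thus ?case by (simp add: Pot0)
next
  case (Suc t)
  hence "Pot (Suc t) \<le> Pot t" using Pot_step[of "Suc t"] by simp
  thus ?case using Suc by simp
qed

lemma Cs_le_T: "t \<le> T \<Longrightarrow> Cs k i t \<le> T"
proof -
  assume tT: "t \<le> T"
  have sub: "{ivl_lo k i..min t (ivl_hi k i)} \<subseteq> {1..T}" using lo_ge1[of k i] tT by auto
  have "Cs k i t \<le> real (card {ivl_lo k i..min t (ivl_hi k i)}) * 1"
    unfolding Cs_def
  proof (rule sum_bounded_above)
    fix u assume "u \<in> {ivl_lo k i..min t (ivl_hi k i)}"
    hence "u \<in> {1..T}" using sub by auto
    thus "\<bar>r k i u\<bar> \<le> 1" by (rule r_bound)
  qed
  also have "card {ivl_lo k i..min t (ivl_hi k i)} \<le> card {1..T}" by (rule card_mono[OF _ sub]) simp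
  hence "real (card {ivl_lo k i..min t (ivl_hi k i)}) * 1 \<le> T" by simp
  finally show ?thesis .
qed

lemma Phi_bound:
  assumes z: "(k, i) \<in> E"
  shows "Phi (Rs k i T) (Cs k i T) \<le> card E * (1 + 3 * ln (1 + T))"
proof -
  have "Phi (Rs k i T) (Cs k i T) \<le> (\<Sum>z\<in>E. Phi (Rs (fst z) (snd z) T) (Cs (fst z) (snd z) T))"
    using member_le_sum[of "(k,i)" E "\<lambda>z. Phi (Rs (fst z) (snd z) T) (Cs (fst z) (snd z) T)"] z finite_E
    by (simp add: Phi_eq)
  also have "\<dots> = Pot T + (\<Sum>z\<in>E. 3 * ln (1 + Cs (fst z) (snd z) T))"
    by (simp add: Pot_def trm_def case_prod_beta' sum_subtractf)
  also have "\<dots> \<le> card E + (\<Sum>z\<in>E. 3 * ln (1 + T))"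
  proof -
    have "(\<Sum>z\<in>E. 3 * ln (1 + Cs (fst z) (snd z) T)) \<le> (\<Sum>z\<in>E. 3 * ln (1 + real T))"
    proof (rule sum_mono)
      fix z assume "z \<in> E"
      have "1 + Cs (fst z) (snd z) T \<le> 1 + T" using Cs_le_T by simp
      moreover have "0 < 1 + Cs (fst z) (snd z) T" using Cs_nonneg[of "fst z" "snd z" T] by linarith
      ultimately show "3 * ln (1 + Cs (fst z) (snd z) T) \<le> 3 * ln (1 + real T)" by simp
    qed
    thus ?thesis using Pot_bound[of T] by simp
  qed
  also have "\<dots> = card E * (1 + 3 * ln (1 + T))" by (simp add: algebra_simps)
  finally show ?thesis .
qed


lemma cardK: "real (card {k::nat. 2^k \<le> T}) \<le> 1 + log 2 T"
proof -
  define M where "M = nat \<lfloor>log 2 T\<rfloor>"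
  have lg0: "0 \<le> log 2 T" using T1 by simp
  have sub: "{k::nat. 2^k \<le> T} \<subseteq> {0..M}"
  proof
    fix k assume "k \<in> {k::nat. 2^k \<le> T}"
    hence "real (2^k) \<le> real T" by (simp only: mem_Collect_eq of_nat_le_iff)
    hence "(2::real)^k \<le> real T" by simp
    hence "real k \<le> log 2 T" by (intro le_log_of_power) auto
    hence "int k \<le> \<lfloor>log 2 T\<rfloor>" by (simp add: le_floor_iff)
    thus "k \<in> {0..M}" by (simp add: M_def)
  qed
  have "card {k::nat. 2^k \<le> T} \<le> card {0..M}" by (rule card_mono[OF _ sub]) simp
  hence "real (card {k::nat. 2^k \<le> T}) \<le> real M + 1" by simp
  also have "real M = of_int \<lfloor>log 2 T\<rfloor>" using lg0 by (simp add: M_def)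
  also have "\<dots> \<le> log 2 T" by simp
  finally show ?thesis by simp
qed

lemma cardE: "real (card E) \<le> T * (1 + log 2 T)"
proof -
  have "card E \<le> card ({k::nat. 2^k \<le> T} \<times> {1..T})"
    by (rule card_mono[OF _ E_sub]) (simp add: finK)
  also have "\<dots> = card {k::nat. 2^k \<le> T} * T" by (simp add: card_cartesian_product)
  finally have "real (card E) \<le> real (card {k::nat. 2^k \<le> T}) * T"
    by (simp only: of_nat_mult[symmetric] of_nat_le_iff)
  also have "\<dots> \<le> (1 + log 2 T) * T" using cardK by (intro mult_right_mono) auto
  finally show ?thesis by (simp add: mult.commute)
qed

lemma E_ne: "(0, 1) \<in> E" using T1 by (simp add: E_def covering_def ivl_lo_def)

lemma cardE_pos: "1 \<le> card E"
proof -
  have "card E \<noteq> 0" using E_ne finite_E by auto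
  thus ?thesis by simp
qed

lemma cT_nonneg: "0 \<le> cT T"
proof -
  have "0 \<le> ln (real T)" using T1 by simp
  moreover have "0 \<le> log 2 T" using T1 by simp
  hence "0 \<le> ln (1 + log 2 T)" by simp
  moreover have "0 \<le> ln (1 + real T)" by simp
  hence "1 \<le> (5 + 3 * ln (1 + real T)) / 2" by simp
  hence "0 \<le> ln ((5 + 3 * ln (1 + real T)) / 2)" by simp
  ultimately show ?thesis unfolding cT_def by linarith
qed

lemma lnB: "ln (card E * (1 + 3 * ln (1 + T))) \<le> cT T"
proof -
  define L where "L = ln (1 + real T)"
  have L0: "0 \<le> L" by (simp add: L_def)
  have lg0: "0 \<le> log 2 T" using T1 by simp
  have cE: "0 < real (card E)" using cardE_pos by simp
  have "ln (card E * (1 + 3 * L)) = ln (card E) + ln (1 + 3 * L)"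
    using cE L0 by (simp add: ln_mult)
  also have "ln (card E) \<le> ln (T * (1 + log 2 T))" using cardE cE by simp
  also have "\<dots> = ln T + ln (1 + log 2 T)"
  proof -
    have "0 < 1 + log 2 T" using lg0 by linarith
    moreover have "0 < real T" using T1 by simp
    ultimately show ?thesis by (simp add: ln_mult_pos)
  qed
  also have "ln (1 + 3 * L) \<le> 1 + ln ((5 + 3 * L) / 2)"
  proof -
    have e2: "2 \<le> exp (1::real)" using exp_ge_add_one_self[of 1] by simp
    have "1 + 3 * L \<le> 2 * ((5 + 3 * L) / 2)" using L0 by simp
    also have "\<dots> \<le> exp 1 * ((5 + 3 * L) / 2)" using e2 L0 by (intro mult_right_mono) auto
    finally have "ln (1 + 3 * L) \<le> ln (exp 1 * ((5 + 3 * L) / 2))" using L0 by simp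
    also have "\<dots> = ln (exp 1) + ln ((5 + 3 * L) / 2)" using L0 by (intro ln_mult_pos) auto
    also have "\<dots> = 1 + ln ((5 + 3 * L) / 2)" by simp
    finally show ?thesis .
  qed
  finally show ?thesis by (simp add: cT_def L_def)
qed

lemma ivl_card: "card {ivl_lo k i..ivl_hi k i} = 2^k" if "1 \<le> i"
proof -
  have "ivl_hi k i = (i-1)*2^k + 2^k" using that by (cases i) (auto simp: ivl_hi_def)
  thus ?thesis by (simp add: ivl_lo_def)
qed

lemma meta:
  assumes i: "1 \<le> i" and hi: "ivl_hi k i \<le> T"
  shows "(\<Sum>t\<in>{ivl_lo k i..ivl_hi k i}. r k i t) \<le> sqrt (3 * cT T) * sqrt (2^k)"
proof -
  have p2: "2^k \<le> ivl_hi k i" using i by (simp add: ivl_hi_def)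
  have lohi: "ivl_lo k i \<le> ivl_hi k i" using i by (cases i) (auto simp: ivl_lo_def ivl_hi_def)
  have zE: "(k, i) \<in> E" using i hi p2 lohi by (simp add: E_def covering_def)
  have mn: "min T (ivl_hi k i) = ivl_hi k i" using hi by simp
  have RsT: "Rs k i T = (\<Sum>t\<in>{ivl_lo k i..ivl_hi k i}. r k i t)" by (simp add: Rs_def mn)
  have CsT: "Cs k i T \<le> 2^k"
  proof -
    have "Cs k i T \<le> real (card {ivl_lo k i..ivl_hi k i}) * 1"
      unfolding Cs_def mn
    proof (rule sum_bounded_above)
      fix u assume "u \<in> {ivl_lo k i..ivl_hi k i}"
      hence "u \<in> {1..T}" using lo_ge1[of k i] hi by auto
      thus "\<bar>r k i u\<bar> \<le> 1" by (rule r_bound)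
    qed
    thus ?thesis using ivl_card[OF i] by simp
  qed
  define B where "B = card E * (1 + 3 * ln (1 + real T))"
  have cT0: "0 \<le> cT T" by (rule cT_nonneg)
  show ?thesis
  proof (cases "Rs k i T \<le> 0")
    case True
    have "0 \<le> sqrt (3 * cT T) * sqrt (2^k)" using cT0 by simp
    thus ?thesis using True RsT by linarith
  next
    case False
    hence R0: "0 < Rs k i T" by simp
    hence C0: "0 < Cs k i T" using Rs_le_Cs[of k i T] by linarith
    have "exp ((Rs k i T)\<^sup>2 / (3 * Cs k i T)) \<le> B"
      using Phi_bound[OF zE] R0 by (simp add: Phi_eq B_def)
    moreover have "0 < B" using calculation exp_gt_zero by (rule order_less_le_trans[rotated])
    ultimately have "(Rs k i T)\<^sup>2 / (3 * Cs k i T) \<le> ln B"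
      by (simp add: ln_ge_iff)
    also have "ln B \<le> cT T" using lnB by (simp add: B_def)
    finally have "(Rs k i T)\<^sup>2 \<le> 3 * Cs k i T * cT T" using C0 by (simp add: field_simps)
    also have "\<dots> \<le> 3 * 2^k * cT T" using CsT cT0 by (intro mult_right_mono) auto
    finally have "Rs k i T \<le> sqrt (3 * 2^k * cT T)" by (rule real_le_rsqrt)
    also have "\<dots> = sqrt (3 * cT T) * sqrt (2^k)" by (simp add: real_sqrt_mult[symmetric] algebra_simps)
    finally show ?thesis using RsT by simp
  qed
qed


lemma per_term:
  assumes t: "t \<in> {1..T}" and u: "u \<in> \<Omega>" and v: "v \<in> \<Omega>"
  shows "f t u - f t v \<le> grad t u \<bullet> (u - v)"
proof -
  have "f t v \<ge> f t u + grad t u \<bullet> (v - u)" by (rule subgrad[OF t u v])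
  moreover have "grad t u \<bullet> (v - u) = - (grad t u \<bullet> (u - v))"
    by (simp add: inner_diff_right)
  ultimately show ?thesis by linarith
qed

lemma x_step:
  assumes "ivl_lo k i \<le> t"
  shows "x k i (Suc t) = closest_point \<Omega> (x k i t - eta D G k *\<^sub>R grad t (x k i t))"
  using assms by (simp add: x_def ogd_step_def)

lemma ogd:
  assumes i: "1 \<le> i" and hi: "ivl_hi k i \<le> T" and v: "v \<in> \<Omega>"
  shows "(\<Sum>t\<in>{ivl_lo k i..ivl_hi k i}. f t (x k i t) - f t v) \<le> D * G * sqrt (2^k)"
proof -
  define lo where "lo = ivl_lo k i"
  define hh where "hh = ivl_hi k i"
  have lohi: "lo \<le> hh" using i by (cases i) (auto simp: lo_def hh_def ivl_lo_def ivl_hi_def)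
  have inT: "\<And>t. t \<in> {lo..hh} \<Longrightarrow> t \<in> {1..T}" using lo_ge1[of k i] hi by (auto simp: lo_def hh_def)
  have pt: "\<And>t. t \<in> {lo..hh} \<Longrightarrow> f t (x k i t) - f t v \<le> grad t (x k i t) \<bullet> (x k i t - v)"
    using per_term inT x_in v by blast
  show ?thesis
  proof (cases "D = 0 \<or> G = 0")
    case True
    have "(\<Sum>t\<in>{lo..hh}. f t (x k i t) - f t v) \<le> 0"
    proof (rule sum_nonpos)
      fix t assume t: "t \<in> {lo..hh}"
      have "grad t (x k i t) \<bullet> (x k i t - v) \<le> norm (grad t (x k i t)) * norm (x k i t - v)"
        by (rule norm_cauchy_schwarz)
      also have "\<dots> \<le> G * D" using A1[OF inT[OF t] x_in] A2[OF x_in v] G0 by (intro mult_mono) auto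
      also have "\<dots> = 0" using True by auto
      finally show "f t (x k i t) - f t v \<le> 0" using pt[OF t] by linarith
    qed
    also have "0 \<le> D * G * sqrt (2^k)" using D0 G0 by simp
    finally show ?thesis by (simp add: lo_def hh_def)
  next
    case False
    hence DG: "0 < D" "0 < G" using D0 G0 by auto
    define q where "q = sqrt (2^k)"
    have q0: "0 < q" by (simp add: q_def)
    have qq: "q * q = 2^k" by (simp add: q_def)
    define et where "et = eta D G k"
    have et: "et = D / (G * q)" by (simp add: et_def eta_def q_def)
    have et0: "0 < et" using DG q0 by (simp add: et)
    define d where "d = (\<lambda>t. (norm (x k i t - v))\<^sup>2)"
    have step: "f t (x k i t) - f t v \<le> (d t - d (Suc t)) / (2 * et) + et * G\<^sup>2 / 2" if t: "t \<in> {lo..hh}" for t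
    proof -
      define g where "g = grad t (x k i t)"
      define y where "y = x k i t - et *\<^sub>R g"
      have xs: "x k i (Suc t) = closest_point \<Omega> y"
        using x_step[of k i t] t by (simp add: y_def g_def et_def lo_def)
      have "dist (closest_point \<Omega> y) (closest_point \<Omega> v) \<le> dist y v"
        by (rule closest_point_lipschitz[OF convex closed nonempty])
      hence "norm (x k i (Suc t) - v) \<le> norm (y - v)"
        using xs closest_point_self[OF v] by (simp add: dist_norm)
      hence "d (Suc t) \<le> (norm (y - v))\<^sup>2" unfolding d_def by (intro power_mono) auto
      also have "y - v = (x k i t - v) - et *\<^sub>R g" by (simp add: y_def)
      also have "(norm ((x k i t - v) - et *\<^sub>R g))\<^sup>2 = d t + (norm (et *\<^sub>R g))\<^sup>2 - 2 * ((x k i t - v) \<bullet> (et *\<^sub>R g))"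
        unfolding d_def using dot_norm_neg[of "x k i t - v" "et *\<^sub>R g"] by simp
      also have "(norm (et *\<^sub>R g))\<^sup>2 = et\<^sup>2 * (norm g)\<^sup>2" using et0 by (simp add: power_mult_distrib)
      also have "(x k i t - v) \<bullet> (et *\<^sub>R g) = et * (g \<bullet> (x k i t - v))" by (simp add: inner_commute)
      finally have h: "2 * et * (g \<bullet> (x k i t - v)) \<le> d t - d (Suc t) + et\<^sup>2 * (norm g)\<^sup>2" by simp
      have "(norm g)\<^sup>2 \<le> G\<^sup>2" using A1[OF inT[OF t] x_in] by (intro power_mono) (auto simp: g_def)
      hence "et\<^sup>2 * (norm g)\<^sup>2 \<le> et\<^sup>2 * G\<^sup>2" by (intro mult_left_mono) auto
      with h have "2 * et * (g \<bullet> (x k i t - v)) \<le> d t - d (Suc t) + et\<^sup>2 * G\<^sup>2" by linarith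
      hence "g \<bullet> (x k i t - v) \<le> (d t - d (Suc t) + et\<^sup>2 * G\<^sup>2) / (2 * et)"
        using et0 by (simp add: field_simps)
      also have "\<dots> = (d t - d (Suc t)) / (2 * et) + et * G\<^sup>2 / 2"
        using et0 by (simp add: field_simps power2_eq_square)
      finally show ?thesis using pt[OF t] by (simp add: g_def)
    qed
    have "(\<Sum>t\<in>{lo..hh}. f t (x k i t) - f t v) \<le> (\<Sum>t\<in>{lo..hh}. (d t - d (Suc t)) / (2 * et) + et * G\<^sup>2 / 2)"
      by (rule sum_mono) (rule step)
    also have "\<dots> = (\<Sum>t\<in>{lo..hh}. d t - d (Suc t)) / (2 * et) + real (card {lo..hh}) * (et * G\<^sup>2 / 2)"
      by (simp add: sum.distrib sum_divide_distrib)
    also have "(\<Sum>t\<in>{lo..hh}. d t - d (Suc t)) = d lo - d (Suc hh)"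
    proof -
      have "(\<Sum>t\<in>{lo..hh}. d (Suc t) - d t) = d (Suc hh) - d lo" using lohi by (intro sum_Suc_diff) simp
      moreover have "(\<Sum>t\<in>{lo..hh}. d t - d (Suc t)) = - (\<Sum>t\<in>{lo..hh}. d (Suc t) - d t)"
        by (simp add: sum_negf[symmetric])
      ultimately show ?thesis by simp
    qed
    also have "card {lo..hh} = 2^k" using ivl_card[OF i] by (simp add: lo_def hh_def)
    also have "d lo - d (Suc hh) \<le> D\<^sup>2"
    proof -
      have "d lo \<le> D\<^sup>2" unfolding d_def using A2[OF x_in v] by (intro power_mono) auto
      moreover have "0 \<le> d (Suc hh)" by (simp add: d_def)
      ultimately show ?thesis by linarith
    qed
    hence "(d lo - d (Suc hh)) / (2 * et) \<le> D\<^sup>2 / (2 * et)" using et0 by (intro divide_right_mono) auto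
    hence "(d lo - d (Suc hh)) / (2 * et) + real (2^k) * (et * G\<^sup>2 / 2) \<le> D\<^sup>2 / (2 * et) + real (2^k) * (et * G\<^sup>2 / 2)"
      by linarith
    also have "D\<^sup>2 / (2 * et) + real (2^k) * (et * G\<^sup>2 / 2) = D * G * q"
    proof -
      have "D\<^sup>2 / (2 * et) = D * G * q / 2" using DG q0 by (simp add: et field_simps power2_eq_square)
      moreover have "real (2^k) * (et * G\<^sup>2 / 2) = D * G * q / 2"
      proof -
        have "real (2^k) = q * q" using qq by simp
        thus ?thesis using DG q0 by (simp add: et field_simps power2_eq_square)
      qed
      ultimately show ?thesis by simp
    qed
    finally show ?thesis by (simp add: lo_def hh_def q_def)
  qed
qed


lemma final:
  assumes tau: "\<tau> \<in> {1..T}" and s: "1 \<le> s \<and> s + \<tau> - 1 \<le> T"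
  shows "(\<Sum>t\<in>{s..s + \<tau> - 1}. f t (w t)) - (INF v\<in>\<Omega>. \<Sum>t\<in>{s..s + \<tau> - 1}. f t v)
           \<le> 8 * (sqrt (3 * cT T) + D * G) * sqrt (real \<tau>)"
proof -
  define A where "A = sqrt (3 * cT T) + D * G"
  have A0: "0 \<le> A" using cT_nonneg D0 G0 by (simp add: A_def)
  have bound: "(\<Sum>t\<in>{s..s + \<tau> - 1}. f t (w t)) - 8 * A * sqrt \<tau> \<le> (\<Sum>t\<in>{s..s + \<tau> - 1}. f t v)"
    if v: "v \<in> \<Omega>" for v
  proof -
    have "(\<Sum>t\<in>{s..s + \<tau> - 1}. f t (w t) - f t v) \<le> 8 * A * sqrt \<tau>"
    proof (rule partition_bound[OF A0, where g = "\<lambda>t. f t (w t) - f t v"])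
      show "1 \<le> s" "1 \<le> \<tau>" using s tau by auto
      fix k m assume km: "s \<le> m*2^k+1" "(m+1)*2^k \<le> s + \<tau> - 1"
      define i where "i = m+1"
      have lo: "ivl_lo k i = m*2^k+1" by (simp add: i_def ivl_lo_def)
      have hi: "ivl_hi k i = (m+1)*2^k" by (simp add: i_def ivl_hi_def)
      have hiT: "ivl_hi k i \<le> T" using hi km s by linarith
      have "(\<Sum>t\<in>{m*2^k+1..(m+1)*2^k}. f t (w t) - f t v)
          = (\<Sum>t\<in>{ivl_lo k i..ivl_hi k i}. r k i t + (f t (x k i t) - f t v))"
        unfolding lo hi r_def by (intro sum.cong) auto
      also have "\<dots> = (\<Sum>t\<in>{ivl_lo k i..ivl_hi k i}. r k i t) + (\<Sum>t\<in>{ivl_lo k i..ivl_hi k i}. f t (x k i t) - f t v)"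
        by (rule sum.distrib)
      also have "\<dots> \<le> sqrt (3 * cT T) * sqrt (2^k) + D * G * sqrt (2^k)"
        using meta[of i k] ogd[of i k v] hiT v by (intro add_mono) (auto simp: i_def)
      also have "\<dots> = A * sqrt (2^k)" by (simp add: A_def algebra_simps)
      finally show "(\<Sum>t\<in>{m*2^k+1..(m+1)*2^k}. f t (w t) - f t v) \<le> A * sqrt (2^k)" .
    qed
    thus ?thesis by (simp add: sum_subtractf)
  qed
  have "(\<Sum>t\<in>{s..s + \<tau> - 1}. f t (w t)) - 8 * A * sqrt \<tau> \<le> (INF v\<in>\<Omega>. \<Sum>t\<in>{s..s + \<tau> - 1}. f t v)"
    by (rule cINF_greatest[OF nonempty bound])
  thus ?thesis by (simp add: A_def)
qed

end

theorem theorem3: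
  fixes \<Omega> :: "'a::euclidean_space set"
    and f :: "nat \<Rightarrow> 'a \<Rightarrow> real"
    and grad :: "nat \<Rightarrow> 'a \<Rightarrow> 'a"
    and D G :: real
    and T :: nat
    and init :: "nat \<Rightarrow> 'a"
    and w :: "nat \<Rightarrow> 'a"
  assumes T: "1 \<le> T"
    and convex: "convex \<Omega>"
    and closed: "closed \<Omega>"
    and zero_in: "0 \<in> \<Omega>"
    and fconv: "\<And>t. t \<in> {1..T} \<Longrightarrow> convex_on \<Omega> (f t)"
    and subgrad: "\<And>t u v. t \<in> {1..T} \<Longrightarrow> u \<in> \<Omega> \<Longrightarrow> v \<in> \<Omega> \<Longrightarrow>
                    f t v \<ge> f t u + grad t u \<bullet> (v - u)"
    and A1: "\<And>t u. t \<in> {1..T} \<Longrightarrow> u \<in> \<Omega> \<Longrightarrow> norm (grad t u) \<le> G"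
    and A2: "\<And>u v. u \<in> \<Omega> \<Longrightarrow> v \<in> \<Omega> \<Longrightarrow> norm (u - v) \<le> D"
    and A3: "\<And>t u. t \<in> {1..T} \<Longrightarrow> u \<in> \<Omega> \<Longrightarrow> 0 \<le> f t u \<and> f t u \<le> 1"
    and init: "\<And>k. init k \<in> \<Omega>"
    and plays: "AOD_plays T \<Omega> f grad D G init w"
  shows "\<forall>\<tau>\<in>{1..T}. \<forall>s. 1 \<le> s \<and> s + \<tau> - 1 \<le> T \<longrightarrow>
           (\<Sum>t\<in>{s..s + \<tau> - 1}. f t (w t))
             - (INF v\<in>\<Omega>. \<Sum>t\<in>{s..s + \<tau> - 1}. f t v)
           \<le> 8 * (sqrt (3 * cT T) + D * G) * sqrt (real \<tau>)"
proof -
  interpret aod \<Omega> f grad D G T init w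
    by (unfold_locales; fact assms)
  show ?thesis using final by blast
qed

end
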